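(* Let $s,t$ be integers with $s\ge t\ge 2$, and let $c\ge s$ be a real number such that for every real $w>1$ and every graph $G$ with $\alpha(G)<s$ and $\omega(G)\le w$ we have $|G|< cw^{s-1}/(\log w)^{s-2}$. If $G$ is a $K_{s,t}$-free graph and $w>1$ is a real number with $w\ge \omega(G)$, then $$|G|\le \frac{c\,\alpha(G)^t w^{s-1}}{(\log w)^{s-2}}.$$
   Context: All graphs are finite and simple; $|G|$ is the number of vertices, $\alpha(G)$ the maximum size of a stable set and $\omega(G)$ the maximum size of a clique in $G$. A graph is $K_{s,t}$-free if it has no induced subgraph isomorphic to the complete bipartite graph $K_{s,t}$. Logarithms are to base two. *)

theory Defs
  imports Complex_Main
begin

text \<open>A finite simple graph: finite vertex set V and a symmetric irreflexive
  adjacency relation E (only its restriction to V matters).\<close>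
definition graph :: "'a set \<Rightarrow> ('a \<Rightarrow> 'a \<Rightarrow> bool) \<Rightarrow> bool" where
  "graph V E \<longleftrightarrow> finite V \<and> (\<forall>x y. E x y \<longrightarrow> E y x) \<and> (\<forall>x. \<not> E x x)"

definition clique_in :: "'a set \<Rightarrow> ('a \<Rightarrow> 'a \<Rightarrow> bool) \<Rightarrow> 'a set \<Rightarrow> bool" where
  "clique_in V E K \<longleftrightarrow> K \<subseteq> V \<and> (\<forall>x\<in>K. \<forall>y\<in>K. x \<noteq> y \<longrightarrow> E x y)"

definition stable_in :: "'a set \<Rightarrow> ('a \<Rightarrow> 'a \<Rightarrow> bool) \<Rightarrow> 'a set \<Rightarrow> bool" where
  "stable_in V E S \<longleftrightarrow> S \<subseteq> V \<and> (\<forall>x\<in>S. \<forall>y\<in>S. \<not> E x y)"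

definition alpha :: "'a set \<Rightarrow> ('a \<Rightarrow> 'a \<Rightarrow> bool) \<Rightarrow> nat" where
  "alpha V E = Max {card S | S. stable_in V E S}"

definition omega :: "'a set \<Rightarrow> ('a \<Rightarrow> 'a \<Rightarrow> bool) \<Rightarrow> nat" where
  "omega V E = Max {card K | K. clique_in V E K}"

text \<open>No induced subgraph isomorphic to K_{s,t}: no disjoint stable sets A, B
  of sizes s, t with every vertex of A adjacent to every vertex of B.\<close>
definition Kst_free :: "nat \<Rightarrow> nat \<Rightarrow> 'a set \<Rightarrow> ('a \<Rightarrow> 'a \<Rightarrow> bool) \<Rightarrow> bool" where
  "Kst_free s t V E \<longleftrightarrow> \<not> (\<exists>A B. A \<subseteq> V \<and> B \<subseteq> V \<and> A \<inter> B = {} \<and>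
      card A = s \<and> card B = t \<and> stable_in V E A \<and> stable_in V E B \<and>
      (\<forall>a\<in>A. \<forall>b\<in>B. E a b))"

end

theory Submission
  imports Defs "HOL-Library.FuncSet"
begin

lemma stable_fin: "finite V \<Longrightarrow> finite {card S | S. stable_in V E S}"
proof -
  assume f: "finite V"
  have "{card S | S. stable_in V E S} \<subseteq> {..card V}"
    using f by (auto simp: stable_in_def intro: card_mono)
  then show ?thesis using finite_subset by blast
qed

lemma alpha_ge: "finite V \<Longrightarrow> stable_in V E Q \<Longrightarrow> card Q \<le> alpha V E"
  unfolding alpha_def by (rule Max_ge) (auto intro: stable_fin)

lemma alpha_attained: "finite V \<Longrightarrow> \<exists>S. stable_in V E S \<and> card S = alpha V E"
proof -
  assume f: "finite V"
  have ne: "{card S | S. stable_in V E S} \<noteq> {}"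
    by (auto simp: stable_in_def)
  have "alpha V E \<in> {card S | S. stable_in V E S}"
    unfolding alpha_def by (rule Max_in[OF stable_fin[OF f] ne])
  then show ?thesis by auto
qed

lemma alpha_less: "finite V \<Longrightarrow> (\<And>Q. stable_in V E Q \<Longrightarrow> card Q < s) \<Longrightarrow> alpha V E < s"
  using alpha_attained by metis

lemma clique_fin: "finite V \<Longrightarrow> finite {card S | S. clique_in V E S}"
proof -
  assume f: "finite V"
  have "{card S | S. clique_in V E S} \<subseteq> {..card V}"
    using f by (auto simp: clique_in_def intro: card_mono)
  then show ?thesis using finite_subset by blast
qed

lemma omega_ge: "finite V \<Longrightarrow> clique_in V E Q \<Longrightarrow> card Q \<le> omega V E"
  unfolding omega_def by (rule Max_ge) (auto intro: clique_fin)

lemma omega_sub: "finite V \<Longrightarrow> V' \<subseteq> V \<Longrightarrow> omega V' E \<le> omega V E"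
proof -
  assume f: "finite V" and sub: "V' \<subseteq> V"
  have f': "finite V'" using f sub finite_subset by blast
  have ne: "{card S | S. clique_in V' E S} \<noteq> {}"
    by (auto simp: clique_in_def)
  have "omega V' E \<in> {card S | S. clique_in V' E S}"
    unfolding omega_def by (rule Max_in[OF clique_fin[OF f'] ne])
  then obtain K where K: "clique_in V' E K" "card K = omega V' E" by auto
  have "clique_in V E K" using K(1) sub by (auto simp: clique_in_def)
  then show ?thesis using omega_ge[OF f] K(2) by metis
qed

lemma family_card:
  assumes fS: "finite S"
  shows "card {Y. Y \<subseteq> S \<and> Y \<noteq> {} \<and> card Y \<le> t} \<le> card S ^ t"
proof -
  have "{Y. Y \<subseteq> S \<and> Y \<noteq> {} \<and> card Y \<le> t} \<subseteq> (\<lambda>f. f ` {..<t}) ` (PiE {..<t} (\<lambda>_. S))"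
  proof
    fix Y assume "Y \<in> {Y. Y \<subseteq> S \<and> Y \<noteq> {} \<and> card Y \<le> t}"
    then have Y: "Y \<subseteq> S" "Y \<noteq> {}" "card Y \<le> t" by auto
    have fY: "finite Y" using Y(1) fS finite_subset by blast
    obtain g where g: "bij_betw g {..<card Y} Y"
      using ex_bij_betw_nat_finite[OF fY] atLeast0LessThan by metis
    have cpos: "card Y > 0" using fY Y(2) by auto
    define f where "f = (\<lambda>i. if i < t then (if i < card Y then g i else g 0) else undefined)"
    have "g ` {..<card Y} = Y" using g bij_betw_imp_surj_on by blast
    have img: "f ` {..<t} = Y"
    proof
      show "f ` {..<t} \<subseteq> Y"
        using \<open>g ` {..<card Y} = Y\<close> cpos by (auto simp: f_def)
      show "Y \<subseteq> f ` {..<t}"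
      proof
        fix y assume "y \<in> Y"
        then obtain i where "i < card Y" "y = g i" using \<open>g ` {..<card Y} = Y\<close> by auto
        then have "f i = y" "i < t" using Y(3) by (auto simp: f_def)
        then show "y \<in> f ` {..<t}" by force
      qed
    qed
    have "f \<in> PiE {..<t} (\<lambda>_. S)"
    proof (unfold PiE_iff, intro conjI ballI)
      fix i assume "i \<in> {..<t}"
      then have "f i \<in> f ` {..<t}" by (rule imageI)
      then show "f i \<in> S" using img Y(1) by blast
    next
      show "f \<in> extensional {..<t}" by (simp add: extensional_def f_def)
    qed
    then show "Y \<in> (\<lambda>f. f ` {..<t}) ` (PiE {..<t} (\<lambda>_. S))" using img by force
  qed
  then have "card {Y. Y \<subseteq> S \<and> Y \<noteq> {} \<and> card Y \<le> t} \<le> card ((\<lambda>f. f ` {..<t}) ` (PiE {..<t} (\<lambda>_. S)))"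
    by (intro card_mono finite_imageI finite_PiE) (auto simp: fS)
  also have "\<dots> \<le> card (PiE {..<t} (\<lambda>_. S))" by (rule card_image_le) (auto simp: fS intro: finite_PiE)
  also have "\<dots> = card S ^ t" by (simp add: card_PiE)
  finally show ?thesis .
qed

theorem mainTheorem5:
  fixes s t :: nat and c :: real and V :: "'a set" and E :: "'a \<Rightarrow> 'a \<Rightarrow> bool" and w :: real
  assumes "2 \<le> t" and "t \<le> s" and "real s \<le> c"
    and hyp: "\<forall>(w'::real) (V'::'a set) E'. w' > 1 \<longrightarrow> graph V' E' \<longrightarrow>
              alpha V' E' < s \<longrightarrow> real (omega V' E') \<le> w' \<longrightarrow>
              real (card V') < c * w' ^ (s - 1) / (log 2 w') ^ (s - 2)"
    and "graph V E" and "Kst_free s t V E"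
    and "w > 1" and "real (omega V E) \<le> w"
  shows "real (card V) \<le> c * real (alpha V E) ^ t * w ^ (s - 1) / (log 2 w) ^ (s - 2)"
proof -
  note g = \<open>graph V E\<close>
  have fV: "finite V" and sym: "\<And>x y. E x y \<Longrightarrow> E y x" and irr: "\<And>x. \<not> E x x"
    using g by (auto simp: graph_def)
  define a where "a = alpha V E"
  obtain S where S: "stable_in V E S" "card S = a"
    using alpha_attained[OF fV] a_def by metis
  have SV: "S \<subseteq> V" using S(1) by (simp add: stable_in_def)
  have fS: "finite S" using SV fV finite_subset by blast
  have Sst: "\<And>x y. x \<in> S \<Longrightarrow> y \<in> S \<Longrightarrow> \<not> E x y" using S(1) by (simp add: stable_in_def)
  define f where "f = c * w ^ (s - 1) / (log 2 w) ^ (s - 2)"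
  have "log 2 w > 0" using \<open>w > 1\<close> by simp
  moreover have "c \<ge> 0" using \<open>real s \<le> c\<close> by linarith
  ultimately have f0: "f \<ge> 0" using \<open>w > 1\<close> unfolding f_def
    by (intro divide_nonneg_nonneg mult_nonneg_nonneg zero_le_power) auto
  define NS where "NS v = {y\<in>S. E v y}" for v
  define F where "F = {Y. Y \<subseteq> S \<and> Y \<noteq> {} \<and> card Y \<le> t}"
  define C where "C Y = {v \<in> V. (v \<notin> S \<and> NS v = Y) \<or> (card Y = t \<and> (\<forall>y\<in>Y. E v y)) \<or> Y = {v}}" for Y
  have fF: "finite F" unfolding F_def by (rule finite_subset[of _ "Pow S"]) (auto simp: fS)
  have cover: "V \<subseteq> \<Union> (C ` F)"
  proof
    fix v assume vV: "v \<in> V"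
    show "v \<in> \<Union> (C ` F)"
    proof (cases "v \<in> S")
      case True
      then have "{v} \<in> F" using \<open>2 \<le> t\<close> by (auto simp: F_def)
      moreover have "v \<in> C {v}" using vV by (auto simp: C_def)
      ultimately show ?thesis by blast
    next
      case False
      have "NS v \<noteq> {}"
      proof
        assume e: "NS v = {}"
        have "stable_in V E (insert v S)"
          using S(1) vV e sym irr by (auto simp: stable_in_def NS_def)
        then have "card (insert v S) \<le> a" using alpha_ge[OF fV] a_def by metis
        then show False using False fS S(2) by simp
      qed
      have fN: "finite (NS v)" using fS by (simp add: NS_def)
      show ?thesis
      proof (cases "card (NS v) \<le> t")
        case True
        then have "NS v \<in> F" using \<open>NS v \<noteq> {}\<close> by (auto simp: F_def NS_def)
        moreover have "v \<in> C (NS v)" using vV False by (auto simp: C_def)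
        ultimately show ?thesis by blast
      next
        case False2: False
        obtain Y where Y: "Y \<subseteq> NS v" "card Y = t"
        proof -
          have le: "t \<le> card (NS v)" using False2 by simp
          show ?thesis using obtain_subset_with_card_n[OF le] that by blast
        qed
        have "Y \<noteq> {}" using Y(2) \<open>2 \<le> t\<close> by auto
        then have "Y \<in> F" using Y by (auto simp: F_def NS_def)
        moreover have "v \<in> C Y" using vV Y by (auto simp: C_def NS_def)
        ultimately show ?thesis by blast
      qed
    qed
  qed
  have small: "real (card (C Y)) < f" if YF: "Y \<in> F" for Y
  proof -
    have CV: "C Y \<subseteq> V" by (auto simp: C_def)
    have fC: "finite (C Y)" using CV fV finite_subset by blast
    have YS: "Y \<subseteq> S" "Y \<noteq> {}" "card Y \<le> t" using YF by (auto simp: F_def)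
    have gC: "graph (C Y) E" using fC sym irr by (auto simp: graph_def)
    have oC: "real (omega (C Y) E) \<le> w"
      using omega_sub[OF fV CV, of E] \<open>real (omega V E) \<le> w\<close> by linarith
    have aC: "alpha (C Y) E < s"
    proof (rule alpha_less[OF fC])
      fix Q assume Q: "stable_in (C Y) E Q"
      have QC: "Q \<subseteq> C Y" and Qst: "\<And>x y. x \<in> Q \<Longrightarrow> y \<in> Q \<Longrightarrow> \<not> E x y"
        using Q by (auto simp: stable_in_def)
      show "card Q < s"
      proof (cases "card Y = t")
        case True
        show ?thesis
        proof (rule ccontr)
          assume "\<not> card Q < s"
          then obtain Q' where Q': "Q' \<subseteq> Q" "card Q' = s"
          proof -
            have le: "s \<le> card Q" using \<open>\<not> card Q < s\<close> by simp
            show ?thesis using obtain_subset_with_card_n[OF le] that by blast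
          qed
          have comp: "\<forall>x\<in>Q'. \<forall>y\<in>Y. E x y"
          proof (intro ballI)
            fix x y assume "x \<in> Q'" "y \<in> Y"
            then have "x \<in> C Y" using Q' QC by auto
            moreover have "Y \<noteq> {x}" using True \<open>2 \<le> t\<close> by auto
            ultimately show "E x y" using \<open>y \<in> Y\<close> by (auto simp: C_def NS_def)
          qed
          have "Q' \<inter> Y = {}" using comp irr by blast
          moreover have "stable_in V E Q'" using Q' QC CV Qst unfolding stable_in_def by blast
          moreover have "stable_in V E Y" using YS Sst SV unfolding stable_in_def by blast
          moreover have "Q' \<subseteq> V" using Q' QC CV by auto
          ultimately have "\<exists>A B. A \<subseteq> V \<and> B \<subseteq> V \<and> A \<inter> B = {} \<and>
              card A = s \<and> card B = t \<and> stable_in V E A \<and> stable_in V E B \<and>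
              (\<forall>a\<in>A. \<forall>b\<in>B. E a b)"
            using Q'(2) True YS(1) SV comp by (intro exI[of _ Q'] exI[of _ Y]) auto
          then show False using \<open>Kst_free s t V E\<close> unfolding Kst_free_def by argo
        qed
      next
        case False
        have noadj: "\<not> E x y" if "x \<in> Q" "y \<in> S - Y" for x y
        proof -
          have "x \<in> C Y" using that QC by auto
          then consider "x \<notin> S" "NS x = Y" | "Y = {x}" using False by (auto simp: C_def)
          then show ?thesis
          proof cases
            case 1 then show ?thesis using that by (auto simp: NS_def)
          next
            case 2 then show ?thesis using that YS Sst by auto
          qed
        qed
        have "stable_in V E (Q \<union> (S - Y))"
          unfolding stable_in_def
        proof (intro conjI ballI)
          show "Q \<union> (S - Y) \<subseteq> V" using QC CV SV by blast
        next
          fix x y assume "x \<in> Q \<union> (S - Y)" "y \<in> Q \<union> (S - Y)"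
          then consider "x \<in> Q" "y \<in> Q" | "x \<in> Q" "y \<in> S - Y" | "x \<in> S - Y" "y \<in> Q"
            | "x \<in> S" "y \<in> S" by blast
          then show "\<not> E x y"
          proof cases
            case 1 then show ?thesis using Qst by blast
          next
            case 2 then show ?thesis using noadj by blast
          next
            case 3 then show ?thesis using noadj sym by blast
          next
            case 4 then show ?thesis using Sst by blast
          qed
        qed
        then have "card (Q \<union> (S - Y)) \<le> a" using alpha_ge[OF fV] a_def by metis
        moreover have "Q \<inter> (S - Y) = {}"
        proof -
          have "x \<in> Y" if "x \<in> Q" "x \<in> S" for x
          proof -
            have "x \<in> C Y" using that QC by auto
            then show ?thesis using that False by (auto simp: C_def)
          qed
          then show ?thesis by blast
        qed
        moreover have "finite Q" using QC fC finite_subset by blast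
        moreover have "card (S - Y) = a - card Y" using S(2) YS fS by (simp add: card_Diff_subset finite_subset)
        moreover have "card Y \<le> a" using S(2) YS fS card_mono by metis
        ultimately have "card Q \<le> card Y" using fS by (simp add: card_Un_disjoint)
        then show ?thesis using YS(3) False \<open>t \<le> s\<close> by linarith
      qed
    qed
    show ?thesis using hyp \<open>w > 1\<close> gC aC oC unfolding f_def by blast
  qed
  have UV: "\<Union> (C ` F) \<subseteq> V" unfolding C_def by blast
  have "card V \<le> card (\<Union> (C ` F))"
    by (rule card_mono[OF finite_subset[OF UV fV] cover])
  also have "\<dots> \<le> (\<Sum>Y\<in>F. card (C Y))" by (rule card_UN_le[OF fF])
  finally have "real (card V) \<le> real (\<Sum>Y\<in>F. card (C Y))" by (simp only: of_nat_le_iff)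
  also have "\<dots> = (\<Sum>Y\<in>F. real (card (C Y)))" by (rule of_nat_sum)
  also have "\<dots> \<le> (\<Sum>Y\<in>F. f)" using small by (intro sum_mono) (simp add: less_imp_le)
  also have "\<dots> = real (card F) * f" by simp
  also have "\<dots> \<le> real a ^ t * f"
  proof -
    have "card F \<le> card S ^ t" unfolding F_def by (rule family_card[OF fS])
    then have "real (card F) \<le> real (a ^ t)" using S(2) by (simp only: of_nat_le_iff)
    then have "real (card F) \<le> real a ^ t" by simp
    then show ?thesis using f0 by (rule mult_right_mono)
  qed
  finally have "real (card V) \<le> real a ^ t * f" .
  moreover have "real a ^ t * f = c * real (alpha V E) ^ t * w ^ (s - 1) / (log 2 w) ^ (s - 2)"
    unfolding f_def a_def by (simp only: times_divide_eq_right mult_ac)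
  ultimately show ?thesis by simp
qed

end
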